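(* Let $V$ be an $N$-dimensional vector space over $\mathbb{F}_q$ and $\nu\ge N$. Let $\overline{Pr}_\nu(V)$ be the set of linear-isometry classes of projective weight functions $\operatorname{wt}_{\mathcal{F}}$ on $V$ with $\mathcal{F}$ a spanning projective point family of cardinality $\nu$, and let $\overline{\mathrm{Gr}}_{\nu-N}(\mathbb{F}_q^\nu)_{d_H\ge3}$ be the set of Hamming-equivalence classes of $(\nu-N)$-dimensional subspaces of $\mathbb{F}_q^\nu$ with minimum Hamming distance at least $3$. Then the map $\Psi$ sending the class of $\operatorname{wt}_{\mathcal{F}}$ to the Hamming-equivalence class of the parent codes of $\mathcal{F}$ is a well-defined bijection $\overline{Pr}_\nu(V)\to\overline{\mathrm{Gr}}_{\nu-N}(\mathbb{F}_q^\nu)_{d_H\ge3}$, whose inverse sends the class of a subspace $P$ to the class of the quotient weight $\operatorname{wt}_{\mathrm{quot},\varphi_P}$, where $\varphi_P:\mathbb{F}_q^\nu\to V$ is any linear map with kernel $P$ and $\mathbb{F}_q^\nu$ carries the Hamming weight.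
   Context: A projective point family in $V$ is a set $\mathcal{F}$ of pairwise linearly independent nonzero vectors (distinct $1$-dimensional subspaces); it is spanning if $\langle\mathcal{F}\rangle=V$. Its projective weight is $\operatorname{wt}_{\mathcal{F}}(x)=\min(\{|I|:I\subseteq\mathcal{F},x\in\langle I\rangle\}\cup\{\infty\})$. A parent function of $\mathcal{F}$ (with $|\mathcal{F}|=\nu$) is a linear map $\varphi:\mathbb{F}_q^\nu\to V$ with $\{\langle\varphi(e_i)\rangle\}_{i=1}^\nu=\mathcal{F}$; its kernel is a parent code of $\mathcal{F}$. Two weight functions $\operatorname{wt}_1,\operatorname{wt}_2$ on $V$ are linearly isometric if $\operatorname{wt}_1=\operatorname{wt}_2\circ L$ for some $L\in\mathrm{GL}(V)$. Subspaces $C_1,C_2\le\mathbb{F}_q^\nu$ are Hamming equivalent if $L(C_1)=C_2$ for some linear Hamming-weight-preserving map $L$ (i.e. a permutation composed with an invertible diagonal matrix). Quotient weight: $\operatorname{wt}_{\mathrm{quot},\psi}(y)=\min\{\operatorname{wt}_H(w):w\in\psi^{-1}(y)\}$. *)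

theory Defs
  imports "HOL-Analysis.Analysis" "HOL-Library.Extended_Nat"
begin

text \<open>Ambient spaces: V = 'a^'n (dimension N = CARD('n)) and F_q^nu = 'a^'m
  (nu = CARD('m)) over a finite field 'a.  Weights take values in enat (infinity allowed).\<close>

definition lin_map :: "('a::field^'m \<Rightarrow> 'a^'n) \<Rightarrow> bool" where
  "lin_map f \<longleftrightarrow> Vector_Spaces.linear ((*s)) ((*s)) f"

definition proj_point_family :: "('a::field^'n) set \<Rightarrow> bool" where
  "proj_point_family F \<longleftrightarrow> finite F \<and> 0 \<notin> F \<and>
     (\<forall>u\<in>F. \<forall>v\<in>F. u \<noteq> v \<longrightarrow> vec.independent {u, v})"

definition spanning_ppf :: "('a::field^'n) set \<Rightarrow> bool" where
  "spanning_ppf F \<longleftrightarrow> proj_point_family F \<and> vec.span F = UNIV"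

definition proj_weight :: "('a::field^'n) set \<Rightarrow> 'a^'n \<Rightarrow> enat" where
  "proj_weight F x = (INF I \<in> {I. I \<subseteq> F \<and> x \<in> vec.span I}. enat (card I))"

definition parent_function :: "('a::field^'m \<Rightarrow> 'a^'n) \<Rightarrow> ('a^'n) set \<Rightarrow> bool" where
  "parent_function \<phi> F \<longleftrightarrow> lin_map \<phi> \<and>
     {vec.span {\<phi> (axis i 1)} | i. True} = {vec.span {v} | v. v \<in> F}"

definition ker_map :: "('a::field^'m \<Rightarrow> 'a^'n) \<Rightarrow> ('a^'m) set" where
  "ker_map \<phi> = {x. \<phi> x = 0}"

definition hamming_wt :: "'a::zero^'m \<Rightarrow> nat" where
  "hamming_wt x = card {i. x $ i \<noteq> 0}"

definition quot_weight :: "('a::field^'m \<Rightarrow> 'a^'n) \<Rightarrow> 'a^'n \<Rightarrow> enat" where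
  "quot_weight \<psi> y = (INF w \<in> {w. \<psi> w = y}. enat (hamming_wt w))"

definition lin_isometric :: "('a::field^'n \<Rightarrow> enat) \<Rightarrow> ('a^'n \<Rightarrow> enat) \<Rightarrow> bool" where
  "lin_isometric w1 w2 \<longleftrightarrow> (\<exists>L::'a^'n \<Rightarrow> 'a^'n. lin_map L \<and> bij L \<and> w1 = w2 \<circ> L)"

definition hamming_equiv :: "('a::field^'m) set \<Rightarrow> ('a^'m) set \<Rightarrow> bool" where
  "hamming_equiv C1 C2 \<longleftrightarrow> (\<exists>L::'a^'m \<Rightarrow> 'a^'m. lin_map L \<and>
      (\<forall>x. hamming_wt (L x) = hamming_wt x) \<and> L ` C1 = C2)"

definition Pr_set :: "nat \<Rightarrow> ('a::field^'n \<Rightarrow> enat) set" where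
  "Pr_set \<nu> = {proj_weight F | F. spanning_ppf F \<and> card F = \<nu>}"

definition Pr_class :: "nat \<Rightarrow> ('a::field^'n \<Rightarrow> enat) \<Rightarrow> ('a^'n \<Rightarrow> enat) set" where
  "Pr_class \<nu> w = {w' \<in> Pr_set \<nu>. lin_isometric w w'}"

definition Pr_bar :: "nat \<Rightarrow> ('a::field^'n \<Rightarrow> enat) set set" where
  "Pr_bar \<nu> = Pr_class \<nu> ` Pr_set \<nu>"

definition Gr_set :: "nat \<Rightarrow> ('a::field^'m) set set" where
  "Gr_set k = {P. vec.subspace P \<and> vec.dim P = k \<and>
                  (\<forall>x\<in>P. x \<noteq> 0 \<longrightarrow> hamming_wt x \<ge> 3)}"

definition Gr_class :: "nat \<Rightarrow> ('a::field^'m) set \<Rightarrow> ('a^'m) set set" where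
  "Gr_class k P = {P' \<in> Gr_set k. hamming_equiv P P'}"

definition Gr_bar :: "nat \<Rightarrow> ('a::field^'m) set set set" where
  "Gr_bar k = Gr_class k ` Gr_set k"

end

theory Submission
  imports Defs
begin

lemma lin_basic:
  assumes "lin_map (f::'a::field^'m \<Rightarrow> 'a^'n)"
  shows "f 0 = 0" "f (x + y) = f x + f y" "f (c *s x) = c *s f x" "f (x - y) = f x - f y"
    "f (- x) = - f x" "vec.span (f ` S) = f ` vec.span S"
proof -
  interpret L: Vector_Spaces.linear "(*s)" "(*s)" f using assms unfolding lin_map_def .
  show "f 0 = 0" "f (x + y) = f x + f y" "f (c *s x) = c *s f x" "f (x - y) = f x - f y"
    "f (- x) = - f x" "vec.span (f ` S) = f ` vec.span S"
    by (simp_all add: L.add L.scale L.diff L.neg L.span_image)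
qed

lemma lin_subspace_image:
  assumes "lin_map (f::'a::field^'m \<Rightarrow> 'a^'n)" "vec.subspace T"
  shows "vec.subspace (f ` T)"
proof -
  interpret L: Vector_Spaces.linear "(*s)" "(*s)" f using assms(1) unfolding lin_map_def .
  show ?thesis using L.subspace_image assms(2) by blast
qed

lemma lin_sum:
  assumes "lin_map (f::'a::field^'m \<Rightarrow> 'a^'n)"
  shows "f (sum g A) = (\<Sum>a\<in>A. f (g a))"
proof -
  interpret L: Vector_Spaces.linear "(*s)" "(*s)" f using assms unfolding lin_map_def .
  show ?thesis by (simp add: L.sum)
qed

lemma lin_comp: "lin_map f \<Longrightarrow> lin_map g \<Longrightarrow> lin_map (f \<circ> g)"
  unfolding lin_map_def using Vector_Spaces.linear_compose by blast

lemma lin_id: "lin_map (id :: 'a::field^'n \<Rightarrow> _)"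
  unfolding lin_map_def by (simp add: vec.linear_id)

lemma lin_inv: "lin_map (L::'a::field^'n \<Rightarrow> 'a^'n) \<Longrightarrow> bij L \<Longrightarrow> lin_map (inv L)"
  unfolding lin_map_def using vec.inj_linear_imp_inv_linear bij_is_inj by blast

lemma lin_inj_surj: "lin_map (L::'a::field^'n \<Rightarrow> 'a^'n) \<Longrightarrow> inj L \<Longrightarrow> bij L"
  unfolding lin_map_def using vec.linear_inj_imp_surj bij_def by blast

lemma lin_expand:
  assumes "lin_map (f::'a::field^'m \<Rightarrow> 'a^'n)"
  shows "f x = (\<Sum>i\<in>UNIV. x$i *s f (axis i 1))"
proof -
  have "f x = f (\<Sum>i\<in>UNIV. x$i *s axis i 1)" by (simp add: basis_expansion)
  also have "\<dots> = (\<Sum>i\<in>UNIV. x$i *s f (axis i 1))" by (simp add: lin_sum[OF assms] lin_basic[OF assms])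
  finally show ?thesis .
qed

lemma lin_mk: "lin_map (\<lambda>x::'a::field^'m. (\<Sum>i\<in>UNIV. x$i *s (g i :: 'a^'n)))"
  unfolding lin_map_def
  by unfold_locales (auto simp: sum.distrib scaleR_add_left vector_sadd_rdistrib vec.scale_sum_right vector_smult_assoc algebra_simps)

lemma hw_zero: "hamming_wt (x::'a::zero^'m) = 0 \<longleftrightarrow> x = 0"
  unfolding hamming_wt_def by (auto simp: vec_eq_iff)

lemma hw_0[simp]: "hamming_wt (0::'a::zero^'m) = 0"
  by (simp add: hw_zero)

lemma smult_axis: "c *s axis i (1::'a::field) = axis i c"
  by (simp add: vec_eq_iff axis_def)

lemma hw_axis: "c \<noteq> 0 \<Longrightarrow> hamming_wt (axis i (c::'a::field) :: 'a^'m) = 1"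
proof -
  assume "c \<noteq> 0"
  then have "{k. (axis i c :: 'a^'m) $ k \<noteq> 0} = {i}" by (auto simp: axis_def)
  then show ?thesis unfolding hamming_wt_def by simp
qed

lemma hw_le2: "hamming_wt (axis i (a::'a::field) + axis j b :: 'a^'m) \<le> 2"
proof -
  have "{k. (axis i a + axis j b :: 'a^'m) $ k \<noteq> 0} \<subseteq> {i, j}" by (auto simp: axis_def)
  then have "card {k. (axis i a + axis j b :: 'a^'m) $ k \<noteq> 0} \<le> card {i, j}"
    by (intro card_mono) auto
  also have "\<dots> \<le> 2" by (simp add: card_insert_le_m1)
  finally show ?thesis unfolding hamming_wt_def .
qed

lemma hw_one: assumes "hamming_wt (x::'a::field^'m) = 1"
  shows "\<exists>i. x $ i \<noteq> 0 \<and> x = axis i (x $ i)"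
proof -
  from assms obtain i where "{k. x $ k \<noteq> 0} = {i}" unfolding hamming_wt_def
    by (auto simp: card_Suc_eq)
  then show ?thesis by (auto simp: vec_eq_iff axis_def)
qed

lemma hw_image_le:
  fixes x :: "'a::field^'m"
  assumes "hamming_wt x \<le> 2"
  shows "\<exists>i j. x = axis i (x$i) + axis j (if i = j then 0 else x$j)"
proof -
  let ?S = "{k. x $ k \<noteq> 0}"
  have c: "card ?S \<le> 2" using assms unfolding hamming_wt_def .
  obtain i j where "?S \<subseteq> {i, j}"
  proof (cases "card ?S")
    case 0 then show ?thesis using that[of undefined undefined] by simp
  next
    case (Suc n)
    then obtain i T where T: "?S = insert i T" "i \<notin> T" "card T = n" by (auto simp: card_Suc_eq)
    show ?thesis
    proof (cases n)
      case 0 then show ?thesis using T that[of i i] by auto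
    next
      case (Suc m)
      then obtain j U where "T = insert j U" "card U = m" using T by (auto simp: card_Suc_eq)
      moreover have "m = 0" using c \<open>card ?S = Suc n\<close> Suc by simp
      ultimately have "U = {}" using T by (simp add: card_eq_0_iff)
      then show ?thesis using T \<open>T = insert j U\<close> that[of i j] by auto
    qed
  qed
  then have "\<forall>k. k \<noteq> i \<and> k \<noteq> j \<longrightarrow> x $ k = 0" by auto
  then show ?thesis
    by (intro exI[of _ i] exI[of _ j]) (auto simp: vec_eq_iff axis_def)
qed

definition good :: "('a::field^'m \<Rightarrow> 'a^'n) \<Rightarrow> bool" where
  "good \<phi> \<longleftrightarrow> lin_map \<phi> \<and> surj \<phi> \<and> (\<forall>x. \<phi> x = 0 \<and> x \<noteq> 0 \<longrightarrow> 3 \<le> hamming_wt x)"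

lemma good_small: "good \<phi> \<Longrightarrow> x \<noteq> 0 \<Longrightarrow> hamming_wt x \<le> 2 \<Longrightarrow> \<phi> x \<noteq> 0"
  unfolding good_def by force

lemma good_ax: "good \<phi> \<Longrightarrow> c \<noteq> 0 \<Longrightarrow> \<phi> (axis i c) \<noteq> 0"
  by (rule good_small) (auto simp: hw_axis axis_eq_0_iff)

lemma good_pair:
  assumes g: "good \<phi>" and ij: "i \<noteq> j" and a: "a \<noteq> 0"
  shows "\<phi> (axis i a) \<noteq> \<phi> (axis j b)"
proof
  assume eq: "\<phi> (axis i a) = \<phi> (axis j b)"
  have l: "lin_map \<phi>" using g unfolding good_def by simp
  have "axis i a - axis j b = axis i a + axis j (-b)" by (simp add: vec_eq_iff axis_def)
  moreover have "axis i a + axis j (-b) \<noteq> 0" using ij a by (auto simp: vec_eq_iff axis_def)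
  moreover have "\<phi> (axis i a - axis j b) = 0" using eq lin_basic(4)[OF l] by simp
  ultimately show False using good_small[OF g _ hw_le2] by metis
qed

lemma qw_le: "\<phi> w = y \<Longrightarrow> quot_weight \<phi> y \<le> enat (hamming_wt w)"
  unfolding quot_weight_def by (rule INF_lower) simp

lemma qw_attained:
  assumes "surj \<phi>"
  shows "\<exists>w. \<phi> w = y \<and> quot_weight \<phi> y = enat (hamming_wt w)"
proof -
  let ?A = "(\<lambda>w. enat (hamming_wt w)) ` {w. \<phi> w = y}"
  have ne: "?A \<noteq> {}" using assms by (auto simp: surj_def) (metis)
  have "quot_weight \<phi> y = Inf ?A" unfolding quot_weight_def by simp
  also have "\<dots> = (LEAST x. x \<in> ?A)" by (subst Inf_enat_def) (simp only: ne if_False)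
  finally have "quot_weight \<phi> y = (LEAST x. x \<in> ?A)" .
  moreover have "(LEAST x. x \<in> ?A) \<in> ?A" using ne by (meson LeastI ex_in_conv)
  ultimately show ?thesis by auto
qed

lemma qw_zero:
  fixes \<phi> :: "'a::field^'m \<Rightarrow> 'a^'n"
  assumes "lin_map \<phi>" "surj \<phi>"
  shows "quot_weight \<phi> y = 0 \<longleftrightarrow> y = 0"
proof
  assume "quot_weight \<phi> y = 0"
  then obtain w where "\<phi> w = y" "hamming_wt w = 0" using qw_attained[OF assms(2)] 
    by (metis enat_0_iff(2))
  then show "y = 0" using lin_basic(1)[OF assms(1)] hw_zero by metis
next
  assume "y = 0"
  have "quot_weight \<phi> 0 \<le> enat (hamming_wt (0::'a^'m))" by (rule qw_le[of \<phi> 0 0, OF lin_basic(1)[OF assms(1)]])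
  then show "quot_weight \<phi> y = 0" using \<open>y = 0\<close> by (simp add: zero_enat_def[symmetric])
qed

lemma qw_one:
  assumes "lin_map \<phi>" "surj \<phi>" "quot_weight \<phi> y = 1"
  shows "\<exists>j c. c \<noteq> 0 \<and> y = \<phi> (axis j c)"
proof -
  obtain w where "\<phi> w = y" "hamming_wt w = 1" using qw_attained[OF assms(2)] assms(3)
    by (metis one_enat_def enat.inject)
  then show ?thesis using hw_one by metis
qed

lemma qw_ax:
  assumes g: "good \<phi>" and c: "c \<noteq> 0"
  shows "quot_weight \<phi> (\<phi> (axis i c)) = 1"
proof -
  have l: "lin_map \<phi>" "surj \<phi>" using g unfolding good_def by auto
  have "quot_weight \<phi> (\<phi> (axis i c)) \<le> 1" using qw_le[of \<phi> "axis i c"] hw_axis[OF c] by (metis one_enat_def)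
  moreover have "quot_weight \<phi> (\<phi> (axis i c)) \<noteq> 0" using qw_zero[OF l] good_ax[OF g c] by simp
  ultimately show ?thesis by (metis ile0_eq le_less not_le one_eSuc eSuc_ile_mono ileI1)
qed

lemma li_refl: "lin_isometric w w"
  unfolding lin_isometric_def by (intro exI[of _ id]) (simp add: lin_id)

lemma li_sym: assumes "lin_isometric w1 w2" shows "lin_isometric w2 w1"
proof -
  obtain L where L: "lin_map L" "bij L" "w1 = w2 \<circ> L" using assms unfolding lin_isometric_def by blast
  have "w2 = w1 \<circ> inv L" by (simp add: L(3) fun_eq_iff surj_f_inv_f bij_is_surj L(2))
  then show ?thesis unfolding lin_isometric_def using lin_inv[OF L(1,2)] bij_imp_bij_inv[OF L(2)] by blast
qed

lemma li_trans: assumes "lin_isometric w1 w2" "lin_isometric w2 w3" shows "lin_isometric w1 w3"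
proof -
  obtain L where L: "lin_map L" "bij L" "w1 = w2 \<circ> L" using assms(1) unfolding lin_isometric_def by blast
  obtain M where M: "lin_map M" "bij M" "w2 = w3 \<circ> M" using assms(2) unfolding lin_isometric_def by blast
  show ?thesis unfolding lin_isometric_def
    by (intro exI[of _ "M \<circ> L"]) (simp add: L M lin_comp bij_comp o_assoc)
qed

lemma he_refl: "hamming_equiv C C"
  unfolding hamming_equiv_def by (intro exI[of _ id]) (simp add: lin_id)

lemma hw_iso_bij:
  fixes L :: "'a::field^'m \<Rightarrow> 'a^'m"
  assumes "lin_map L" "\<forall>x. hamming_wt (L x) = hamming_wt x"
  shows "bij L"
proof -
  have "inj L"
  proof (rule injI)
    fix x y assume "L x = L y"
    then have "L (x - y) = 0" using lin_basic(4)[OF assms(1), of x y] by simp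
    then have "hamming_wt (x - y) = 0" using assms(2)[rule_format, of "x - y"] by simp
    then show "x = y" using hw_zero[of "x - y"] by simp
  qed
  then show ?thesis using lin_inj_surj[OF assms(1)] by blast
qed

lemma he_sym: assumes "hamming_equiv C1 C2" shows "hamming_equiv C2 C1"
proof -
  obtain L where L: "lin_map L" "\<forall>x. hamming_wt (L x) = hamming_wt x" "L ` C1 = C2"
    using assms unfolding hamming_equiv_def by blast
  have b: "bij L" using hw_iso_bij[OF L(1,2)] .
  have "\<forall>x. hamming_wt (inv L x) = hamming_wt x" using L(2) surj_f_inv_f[OF bij_is_surj[OF b]] by metis
  moreover have "inv L ` C2 = C1" using L(3) b by (metis bij_is_inj image_inv_f_f)
  ultimately show ?thesis unfolding hamming_equiv_def using lin_inv[OF L(1) b] by blast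
qed

lemma he_trans: assumes "hamming_equiv C1 C2" "hamming_equiv C2 C3" shows "hamming_equiv C1 C3"
proof -
  obtain L where L: "lin_map L" "\<forall>x. hamming_wt (L x) = hamming_wt x" "L ` C1 = C2"
    using assms(1) unfolding hamming_equiv_def by blast
  obtain M where M: "lin_map M" "\<forall>x. hamming_wt (M x) = hamming_wt x" "M ` C2 = C3"
    using assms(2) unfolding hamming_equiv_def by blast
  have "(M \<circ> L) ` C1 = C3" using L(3) M(3) image_comp[of M L C1] by simp
  moreover have "\<forall>x. hamming_wt ((M \<circ> L) x) = hamming_wt x" using L(2) M(2) by simp
  ultimately show ?thesis unfolding hamming_equiv_def using lin_comp[OF M(1) L(1)] by blast
qed

lemma Pr_class_eq:
  assumes "w1 \<in> Pr_set \<nu>" "w2 \<in> Pr_set \<nu>"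
  shows "Pr_class \<nu> w1 = Pr_class \<nu> w2 \<longleftrightarrow> lin_isometric w1 w2"
proof
  assume "Pr_class \<nu> w1 = Pr_class \<nu> w2"
  moreover have "w2 \<in> Pr_class \<nu> w2" using assms(2) li_refl unfolding Pr_class_def by blast
  ultimately show "lin_isometric w1 w2" unfolding Pr_class_def by blast
next
  assume "lin_isometric w1 w2"
  then have "lin_isometric w1 w \<longleftrightarrow> lin_isometric w2 w" for w
    using li_sym li_trans by metis
  then show "Pr_class \<nu> w1 = Pr_class \<nu> w2" unfolding Pr_class_def by simp
qed

lemma Gr_class_eq:
  assumes "C1 \<in> Gr_set k" "C2 \<in> Gr_set k"
  shows "Gr_class k C1 = Gr_class k C2 \<longleftrightarrow> hamming_equiv C1 C2"
proof
  assume "Gr_class k C1 = Gr_class k C2"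
  moreover have "C2 \<in> Gr_class k C2" using assms(2) he_refl unfolding Gr_class_def by blast
  ultimately show "hamming_equiv C1 C2" unfolding Gr_class_def by blast
next
  assume "hamming_equiv C1 C2"
  then have "hamming_equiv C1 C \<longleftrightarrow> hamming_equiv C2 C" for C
    using he_sym he_trans by metis
  then show "Gr_class k C1 = Gr_class k C2" unfolding Gr_class_def by simp
qed

lemma lin_eq_iff:
  assumes "lin_map f" shows "f a = f b \<longleftrightarrow> f (a - b) = 0"
  using lin_basic(4)[OF assms, of a b] by simp

lemma lin_mapI:
  assumes "\<And>x y. f (x + y) = f x + f y" "\<And>c x. f (c *s x) = c *s f x"
  shows "lin_map (f::'a::field^'m \<Rightarrow> 'a^'n)"
  unfolding lin_map_def by unfold_locales (use assms in auto)

lemma qw_same_ker: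
  fixes \<phi>1 \<phi>2 :: "'a::field^'m \<Rightarrow> 'a^'n"
  assumes l1: "lin_map \<phi>1" and s1: "surj \<phi>1" and l2: "lin_map \<phi>2" and s2: "surj \<phi>2"
    and k: "ker_map \<phi>1 = ker_map \<phi>2"
  shows "lin_isometric (quot_weight \<phi>1) (quot_weight \<phi>2)"
proof -
  define L where "L y = \<phi>2 (inv \<phi>1 y)" for y
  have inv1: "\<phi>1 (inv \<phi>1 y) = y" for y using s1 by (simp add: surj_f_inv_f)
  have kk: "\<phi>1 x = 0 \<longleftrightarrow> \<phi>2 x = 0" for x using k unfolding ker_map_def by blast
  have key: "\<phi>2 w = L y \<longleftrightarrow> \<phi>1 w = y" for w y
  proof -
    have "\<phi>2 w = L y \<longleftrightarrow> \<phi>2 (w - inv \<phi>1 y) = 0" unfolding L_def by (rule lin_eq_iff[OF l2])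
    also have "\<dots> \<longleftrightarrow> \<phi>1 (w - inv \<phi>1 y) = 0" using kk by simp
    also have "\<dots> \<longleftrightarrow> \<phi>1 w = \<phi>1 (inv \<phi>1 y)" by (rule lin_eq_iff[OF l1, symmetric])
    finally show ?thesis by (simp add: inv1)
  qed
  have "lin_map L"
  proof (rule lin_mapI)
    fix x y
    have "\<phi>1 (inv \<phi>1 x + inv \<phi>1 y) = x + y" by (simp add: lin_basic(2)[OF l1] inv1)
    then have "\<phi>2 (inv \<phi>1 x + inv \<phi>1 y) = L (x + y)" using key by blast
    then show "L (x + y) = L x + L y" unfolding L_def by (simp add: lin_basic(2)[OF l2])
  next
    fix c x
    have "\<phi>1 (c *s inv \<phi>1 x) = c *s x" by (simp add: lin_basic(3)[OF l1] inv1)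
    then have "\<phi>2 (c *s inv \<phi>1 x) = L (c *s x)" using key by blast
    then show "L (c *s x) = c *s L x" unfolding L_def by (simp add: lin_basic(3)[OF l2])
  qed
  moreover have "bij L"
  proof (rule bijI)
    show "inj L"
    proof (rule injI)
      fix y z assume "L y = L z"
      then show "y = z" using key[of "inv \<phi>1 y" y] key[of "inv \<phi>1 y" z] unfolding L_def by simp
    qed
    show "surj L" unfolding surj_def
    proof
      fix v
      obtain w where "v = \<phi>2 w" using s2 by (metis surj_def)
      then show "\<exists>x. v = L x" using key by metis
    qed
  qed
  moreover have "quot_weight \<phi>1 = quot_weight \<phi>2 \<circ> L"
    unfolding quot_weight_def by (simp add: fun_eq_iff key)
  ultimately show ?thesis unfolding lin_isometric_def by blast
qed

lemma qw_comp_iso: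
  fixes \<phi> :: "'a::field^'m \<Rightarrow> 'a^'n" and D :: "'a^'m \<Rightarrow> 'a^'m"
  assumes l: "lin_map D" and h: "\<forall>x. hamming_wt (D x) = hamming_wt x"
  shows "quot_weight (\<phi> \<circ> D) = quot_weight \<phi>"
proof
  fix y
  have b: "bij D" using hw_iso_bij[OF l h] .
  have "(\<lambda>w. enat (hamming_wt w)) ` {w. \<phi> (D w) = y} = (\<lambda>v. enat (hamming_wt v)) ` {v. \<phi> v = y}"
  proof (intro equalityI subsetI)
    fix a assume "a \<in> (\<lambda>w. enat (hamming_wt w)) ` {w. \<phi> (D w) = y}"
    then obtain w where "\<phi> (D w) = y" "a = enat (hamming_wt w)" by blast
    then show "a \<in> (\<lambda>v. enat (hamming_wt v)) ` {v. \<phi> v = y}" using h by (metis (mono_tags, lifting) image_eqI mem_Collect_eq)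
  next
    fix a assume "a \<in> (\<lambda>v. enat (hamming_wt v)) ` {v. \<phi> v = y}"
    then obtain v where v: "\<phi> v = y" "a = enat (hamming_wt v)" by blast
    have "D (inv D v) = v" using b by (simp add: bij_is_surj surj_f_inv_f)
    then show "a \<in> (\<lambda>w. enat (hamming_wt w)) ` {w. \<phi> (D w) = y}" using v h
      by (metis (mono_tags, lifting) image_eqI mem_Collect_eq)
  qed
  then show "quot_weight (\<phi> \<circ> D) y = quot_weight \<phi> y" unfolding quot_weight_def by simp
qed

lemma he_ker:
  fixes \<phi>1 \<phi>2 :: "'a::field^'m \<Rightarrow> 'a^'n"
  assumes g1: "good \<phi>1" and g2: "good \<phi>2" and he: "hamming_equiv (ker_map \<phi>1) (ker_map \<phi>2)"
  shows "lin_isometric (quot_weight \<phi>1) (quot_weight \<phi>2)"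
proof -
  obtain L where L: "lin_map L" "\<forall>x. hamming_wt (L x) = hamming_wt x" "L ` ker_map \<phi>1 = ker_map \<phi>2"
    using he unfolding hamming_equiv_def by blast
  have b: "bij L" using hw_iso_bij[OF L(1,2)] .
  have l1: "lin_map \<phi>1" "surj \<phi>1" and l2: "lin_map \<phi>2" "surj \<phi>2" using g1 g2 unfolding good_def by auto
  have "ker_map (\<phi>2 \<circ> L) = ker_map \<phi>1"
  proof -
    have "\<phi>2 (L x) = 0 \<longleftrightarrow> \<phi>1 x = 0" for x
    proof -
      have "\<phi>2 (L x) = 0 \<longleftrightarrow> L x \<in> L ` ker_map \<phi>1" using L(3) unfolding ker_map_def by auto
      also have "\<dots> \<longleftrightarrow> x \<in> ker_map \<phi>1" using bij_is_inj[OF b] by (simp add: inj_image_mem_iff)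
      finally show ?thesis unfolding ker_map_def by simp
    qed
    then show ?thesis unfolding ker_map_def by auto
  qed
  moreover have "surj (\<phi>2 \<circ> L)" using comp_surj[OF bij_is_surj[OF b] l2(2)] .
  ultimately have "lin_isometric (quot_weight \<phi>1) (quot_weight (\<phi>2 \<circ> L))"
    using qw_same_ker[OF l1 lin_comp[OF l2(1) L(1)]] by simp
  then show ?thesis using qw_comp_iso[OF L(1,2), of \<phi>2] by metis
qed

lemma smult_axis2: "a *s axis j (b::'a::field) = axis j (a * b)"
  by (simp add: vec_eq_iff axis_def)

lemma lin_axis: "lin_map f \<Longrightarrow> f (axis i (c::'a::field)) = c *s f (axis i 1)"
  using lin_basic(3)[of f c "axis i 1"] smult_axis[of c i] by simp

lemma iso_he:
  fixes \<phi>1 \<phi>2 :: "'a::field^'m \<Rightarrow> 'a^'n"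
  assumes g1: "good \<phi>1" and g2: "good \<phi>2" and li: "lin_isometric (quot_weight \<phi>1) (quot_weight \<phi>2)"
  shows "hamming_equiv (ker_map \<phi>1) (ker_map \<phi>2)"
proof -
  obtain L where L: "lin_map L" "bij L" "quot_weight \<phi>1 = quot_weight \<phi>2 \<circ> L"
    using li unfolding lin_isometric_def by blast
  have l1: "lin_map \<phi>1" "surj \<phi>1" and l2: "lin_map \<phi>2" "surj \<phi>2" using g1 g2 unfolding good_def by auto
  have "\<exists>j c. c \<noteq> 0 \<and> L (\<phi>1 (axis i 1)) = \<phi>2 (axis j c)" for i
  proof -
    have "quot_weight \<phi>2 (L (\<phi>1 (axis i 1))) = 1" using qw_ax[OF g1, of 1 i] L(3) by (simp add: fun_eq_iff)
    then show ?thesis using qw_one[OF l2] by blast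
  qed
  then obtain \<sigma> c where sc: "\<And>i. c i \<noteq> 0" "\<And>i. L (\<phi>1 (axis i 1)) = \<phi>2 (axis (\<sigma> i) (c i))"
    by metis
  have Linj: "inj L" using L(2) bij_is_inj by blast
  have "inj \<sigma>"
  proof (rule injI)
    fix i i' assume eq: "\<sigma> i = \<sigma> i'"
    have A: "L (\<phi>1 (axis k a)) = (a * c k) *s \<phi>2 (axis (\<sigma> k) 1)" for k a
      by (simp only: lin_axis[OF l1(1), of k a] lin_basic(3)[OF L(1)] sc(2)
          lin_axis[OF l2(1), of "\<sigma> k" "c k"] vector_smult_assoc)
    have "L (\<phi>1 (axis i (c i'))) = L (\<phi>1 (axis i' (c i)))"
      unfolding A eq by (simp add: mult.commute)
    then have "\<phi>1 (axis i (c i')) = \<phi>1 (axis i' (c i))" using Linj by (simp add: inj_eq)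
    then show "i = i'" using good_pair[OF g1 _ sc(1)[of i']] by blast
  qed
  then have bs: "bij \<sigma>" using finite_UNIV_inj_surj[of \<sigma>] by (simp add: bij_def)
  define D where "D x = (\<chi> j. c (inv \<sigma> j) * x $ (inv \<sigma> j))" for x
  have lD: "lin_map D"
    by (rule lin_mapI) (simp_all add: D_def vec_eq_iff algebra_simps)
  have hD: "\<forall>x. hamming_wt (D x) = hamming_wt x"
  proof
    fix x
    have "{j. D x $ j \<noteq> 0} = \<sigma> ` {i. x $ i \<noteq> 0}"
    proof (intro equalityI subsetI)
      fix j assume "j \<in> {j. D x $ j \<noteq> 0}"
      then have "inv \<sigma> j \<in> {i. x $ i \<noteq> 0}" by (simp add: D_def)
      moreover have "\<sigma> (inv \<sigma> j) = j" using bs by (simp add: bij_is_surj surj_f_inv_f)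
      ultimately show "j \<in> \<sigma> ` {i. x $ i \<noteq> 0}" by (metis imageI)
    next
      fix j assume "j \<in> \<sigma> ` {i. x $ i \<noteq> 0}"
      then obtain i where "j = \<sigma> i" "x $ i \<noteq> 0" by blast
      moreover have "inv \<sigma> (\<sigma> i) = i" using \<open>inj \<sigma>\<close> by simp
      ultimately show "j \<in> {j. D x $ j \<noteq> 0}" using sc(1) by (simp add: D_def)
    qed
    then show "hamming_wt (D x) = hamming_wt x" unfolding hamming_wt_def
      using card_image[OF inj_on_subset[OF \<open>inj \<sigma>\<close>]] by simp
  qed
  have Dax: "D (axis i 1) = axis (\<sigma> i) (c i)" for i
  proof -
    have "inv \<sigma> j = i \<longleftrightarrow> j = \<sigma> i" for j using bs by (metis bij_inv_eq_iff)
    then show ?thesis by (auto simp: D_def vec_eq_iff axis_def inv_f_f[OF \<open>inj \<sigma>\<close>])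
  qed
  have comm: "L (\<phi>1 x) = \<phi>2 (D x)" for x
  proof -
    have "(L \<circ> \<phi>1) x = (\<Sum>i\<in>UNIV. x$i *s (L \<circ> \<phi>1) (axis i 1))" by (rule lin_expand[OF lin_comp[OF L(1) l1(1)]])
    also have "\<dots> = (\<Sum>i\<in>UNIV. x$i *s (\<phi>2 \<circ> D) (axis i 1))" by (simp add: Dax sc(2))
    also have "\<dots> = (\<phi>2 \<circ> D) x" by (rule lin_expand[OF lin_comp[OF l2(1) lD], symmetric])
    finally show ?thesis by simp
  qed
  have L0: "L y = 0 \<longleftrightarrow> y = 0" for y using Linj lin_basic(1)[OF L(1)] by (metis injD)
  have bD: "bij D" using hw_iso_bij[OF lD hD] .
  have "D ` ker_map \<phi>1 = ker_map \<phi>2"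
  proof (intro equalityI subsetI)
    fix y assume "y \<in> D ` ker_map \<phi>1"
    then obtain x where "y = D x" "\<phi>1 x = 0" unfolding ker_map_def by blast
    then have "\<phi>2 y = L 0" using comm[of x] by simp
    then show "y \<in> ker_map \<phi>2" using L0[of 0] unfolding ker_map_def by simp
  next
    fix y assume y: "y \<in> ker_map \<phi>2"
    have Dy: "D (inv D y) = y" using bD by (simp add: bij_is_surj surj_f_inv_f)
    have "L (\<phi>1 (inv D y)) = 0" using comm[of "inv D y"] y Dy unfolding ker_map_def by simp
    then have "\<phi>1 (inv D y) = 0" using L0 by blast
    then have "inv D y \<in> ker_map \<phi>1" unfolding ker_map_def by simp
    then show "y \<in> D ` ker_map \<phi>1" using Dy by (metis imageI)
  qed
  then show ?thesis unfolding hamming_equiv_def using lD hD by blast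
qed

lemma lin_subspace_ker: "lin_map (\<phi>::'a::field^'m \<Rightarrow> 'a^'n) \<Longrightarrow> vec.subspace (ker_map \<phi>)"
  unfolding vec.subspace_def ker_map_def
  by (auto simp: lin_basic(1,2,3))

lemma lin_subspace_range: "lin_map (\<phi>::'a::field^'m \<Rightarrow> 'a^'n) \<Longrightarrow> vec.subspace (range \<phi>)"
  unfolding vec.subspace_def
  by (auto simp: lin_basic(1,2,3)[symmetric] intro: range_eqI[of _ _ 0] range_eqI)

lemma dim_UNIV_card: "vec.dim (UNIV :: ('a::field^'n) set) = CARD('n)"
  by (simp add: vec.dim_UNIV card_cart_basis)

lemma rank_nullity:
  fixes \<phi> :: "'a::field^'m \<Rightarrow> 'a^'n"
  assumes l: "lin_map \<phi>"
  shows "vec.dim (ker_map \<phi>) + vec.dim (range \<phi>) = CARD('m)"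
proof -
  obtain g :: "'a^'n \<Rightarrow> 'a^'m" where g: "Vector_Spaces.linear (*s) (*s) g" "\<forall>v\<in>range \<phi>. \<phi> (g v) = v"
    using vec.linear_exists_right_inverse_on[of \<phi> UNIV] l unfolding lin_map_def by auto
  have lg: "lin_map g" using g(1) unfolding lin_map_def .
  let ?K = "ker_map \<phi>" and ?G = "g ` range \<phi>"
  have sK: "vec.subspace ?K" by (rule lin_subspace_ker[OF l])
  have sR: "vec.subspace (range \<phi>)" by (rule lin_subspace_range[OF l])
  have sG: "vec.subspace ?G" using lin_subspace_image[OF lg sR] .
  have sum: "{x + y |x y. x \<in> ?K \<and> y \<in> ?G} = UNIV"
  proof -
    have "x \<in> {x + y |x y. x \<in> ?K \<and> y \<in> ?G}" for x
    proof -
      have "\<phi> (x - g (\<phi> x)) = 0" using g(2) lin_basic(4)[OF l, of x "g (\<phi> x)"] by simp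
      then have "x - g (\<phi> x) \<in> ?K" unfolding ker_map_def by simp
      moreover have "g (\<phi> x) \<in> ?G" by simp
      ultimately show ?thesis by force
    qed
    then show ?thesis by blast
  qed
  have int: "?K \<inter> ?G = {0}"
  proof -
    have "x = 0" if xK: "x \<in> ?K" and xG: "x \<in> ?G" for x
    proof -
      obtain w where x: "x = g (\<phi> w)" using xG by blast
      have "\<phi> x = \<phi> w" using x g(2) by simp
      then have "\<phi> w = 0" using xK unfolding ker_map_def by simp
      then show "x = 0" using x lin_basic(1)[OF lg] by simp
    qed
    moreover have "0 \<in> ?K" "0 \<in> ?G" using sK sG unfolding vec.subspace_def by auto
    ultimately show ?thesis by blast
  qed
  have "inj_on g (vec.span (range \<phi>))"
    using g(2) sR by (metis inj_on_inverseI vec.span_eq_iff)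
  then have dG: "vec.dim ?G = vec.dim (range \<phi>)"
    using vec.dim_image_eq[OF g(1)] by blast
  have "vec.dim (UNIV::('a^'m) set) + vec.dim ({0}::('a^'m) set) = vec.dim ?K + vec.dim ?G"
    using vec.dim_sums_Int[OF sK sG] unfolding sum int .
  then show ?thesis using dG dim_UNIV_card[where 'a='a and 'n='m] by simp
qed

lemma good_Gr:
  fixes \<phi> :: "'a::field^'m \<Rightarrow> 'a^'n"
  assumes g: "good \<phi>"
  shows "ker_map \<phi> \<in> Gr_set (CARD('m) - CARD('n))"
proof -
  have l: "lin_map \<phi>" "surj \<phi>" using g unfolding good_def by auto
  have "vec.dim (ker_map \<phi>) = CARD('m) - CARD('n)"
    using rank_nullity[OF l(1)] l(2) dim_UNIV_card[where 'a='a and 'n='n] by simp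
  then show ?thesis unfolding Gr_set_def using lin_subspace_ker[OF l(1)] g
    unfolding good_def ker_map_def by auto
qed

lemma Gr_good:
  fixes \<phi> :: "'a::field^'m \<Rightarrow> 'a^'n"
  assumes le: "CARD('n) \<le> CARD('m)" and l: "lin_map \<phi>" and P: "ker_map \<phi> \<in> Gr_set (CARD('m) - CARD('n))"
  shows "good \<phi>"
proof -
  have "vec.dim (ker_map \<phi>) = CARD('m) - CARD('n)" using P unfolding Gr_set_def by auto
  then have "vec.dim (range \<phi>) = CARD('n)" using rank_nullity[OF l] le by simp
  then have "range \<phi> = UNIV"
    using vec.subspace_dim_equal[OF lin_subspace_range[OF l] vec.subspace_UNIV]
      dim_UNIV_card[where 'a='a and 'n='n] by simp
  then show ?thesis unfolding good_def using l P unfolding Gr_set_def ker_map_def by auto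
qed

lemma Gr_construct:
  fixes P :: "('a::field^'m) set"
  assumes le: "CARD('n) \<le> CARD('m)" and P: "P \<in> Gr_set (CARD('m) - CARD('n))"
  shows "\<exists>\<phi>::'a^'m \<Rightarrow> 'a^'n. lin_map \<phi> \<and> ker_map \<phi> = P"
proof -
  have sP: "vec.subspace P" and dP: "vec.dim P = CARD('m) - CARD('n)" using P unfolding Gr_set_def by auto
  obtain B0 where B0: "B0 \<subseteq> P" "vec.independent B0" "P \<subseteq> vec.span B0" "card B0 = vec.dim P"
    using vec.basis_exists[of P] by blast
  define B where "B = vec.extend_basis B0"
  have B: "B0 \<subseteq> B" "vec.independent B" "vec.span B = UNIV"
    unfolding B_def using vec.extend_basis_superset vec.independent_extend_basis vec.span_extend_basis B0(2) by auto
  have fB: "finite B" using B(2) vec.finiteI_independent by blast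
  have cB: "card B = CARD('m)" using vec.basis_card_eq_dim[of B UNIV] B dim_UNIV_card[where 'a='a and 'n='m] by simp
  have cC: "card (B - B0) = CARD('n)"
    using card_Diff_subset[OF finite_subset[OF B(1) fB] B(1)] cB B0(4) dP le by simp
  obtain h where h: "bij_betw h (B - B0) (cart_basis :: ('a^'n) set)"
    using finite_same_card_bij[of "B - B0" "cart_basis :: ('a^'n) set"] fB finite_cart_basis cC
      card_cart_basis[where 'a='a and 'i='n] by auto
  obtain \<phi> :: "'a^'m \<Rightarrow> 'a^'n" where \<phi>: "Vector_Spaces.linear (*s) (*s) \<phi>"
    "\<forall>x\<in>B. \<phi> x = (if x \<in> B0 then 0 else h x)"
    using vec.linear_independent_extend[OF B(2), of "\<lambda>x. if x \<in> B0 then 0 else h x"] by blast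
  have l: "lin_map \<phi>" using \<phi>(1) unfolding lin_map_def .
  have "cart_basis \<subseteq> range \<phi>"
  proof
    fix v :: "'a^'n" assume "v \<in> cart_basis"
    then have "v \<in> h ` (B - B0)" using bij_betw_imp_surj_on[OF h] by simp
    then obtain b where b: "b \<in> B - B0" "h b = v" by (elim imageE) simp
    then have "\<phi> b = v" using \<phi>(2) by simp
    then show "v \<in> range \<phi>" by blast
  qed
  then have "vec.span cart_basis \<subseteq> range \<phi>" using vec.span_minimal lin_subspace_range[OF l] by blast
  then have surj: "range \<phi> = UNIV" using span_cart_basis by (metis top.extremum_uniqueI)
  have "B0 \<subseteq> ker_map \<phi>" using \<phi>(2) B(1) unfolding ker_map_def by auto
  then have "vec.span B0 \<subseteq> ker_map \<phi>" using vec.span_minimal lin_subspace_ker[OF l] by blast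
  then have sub: "P \<subseteq> ker_map \<phi>" using B0(3) by blast
  have "vec.dim (ker_map \<phi>) = CARD('m) - CARD('n)"
    using rank_nullity[OF l] surj dim_UNIV_card[where 'a='a and 'n='n] by simp
  then have "P = ker_map \<phi>" using vec.subspace_dim_equal[OF sP lin_subspace_ker[OF l] sub] dP by simp
  then show ?thesis using l by blast
qed

lemma indep2:
  fixes u v :: "'a::field^'n"
  assumes "v \<noteq> 0" "u \<notin> vec.span {v}"
  shows "vec.independent {u, v}"
proof -
  have "u \<noteq> v" using assms(2) vec.span_base[of v "{v}"] by auto
  moreover have "vec.independent {v}" using assms(1) vec.independent_insert[of v "{}"]
    by (simp add: vec.independent_empty vec.span_empty)
  ultimately show ?thesis using vec.independent_insert[of u "{v}"] assms(2) by simp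
qed

lemma span_single_sub:
  fixes u w :: "'a::field^'n"
  assumes "u = c *s w"
  shows "vec.span {u} \<subseteq> vec.span {w}"
proof -
  have "u \<in> vec.span {w}" using assms vec.span_scale[OF vec.span_base[of w "{w}"]] by simp
  then show ?thesis using vec.span_minimal[OF _ vec.subspace_span] by blast
qed

lemma good_family:
  fixes \<phi> :: "'a::field^'m \<Rightarrow> 'a^'n"
  assumes g: "good \<phi>"
  defines "F \<equiv> range (\<lambda>i. \<phi> (axis i 1))"
  shows "spanning_ppf F \<and> card F = CARD('m) \<and> parent_function \<phi> F"
proof -
  have l: "lin_map \<phi>" "surj \<phi>" using g unfolding good_def by auto
  have inj: "inj (\<lambda>i. \<phi> (axis i 1))"
    by (rule injI) (use good_pair[OF g _ one_neq_zero] in blast)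
  have fin: "finite F" unfolding F_def by simp
  have z: "0 \<notin> F" unfolding F_def using good_ax[OF g one_neq_zero] by auto
  have pw: "vec.independent {u, v}" if uv: "u \<in> F" "v \<in> F" "u \<noteq> v" for u v
  proof -
    obtain i j where ij: "u = \<phi> (axis i 1)" "v = \<phi> (axis j 1)" using uv(1,2) unfolding F_def by blast
    then have "i \<noteq> j" using uv(3) by blast
    have "u \<notin> vec.span {v}"
    proof
      assume "u \<in> vec.span {v}"
      then obtain k where "u = k *s v" unfolding vec.span_singleton by blast
      then have "\<phi> (axis i 1) = \<phi> (axis j k)" using ij lin_axis[OF l(1), of j k] by simp
      then show False using good_pair[OF g \<open>i \<noteq> j\<close> one_neq_zero] by blast
    qed
    moreover have "v \<noteq> 0" using z uv(2) by blast
    ultimately show ?thesis using indep2 by blast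
  qed
  have "F = \<phi> ` cart_basis" unfolding F_def cart_basis_def by blast
  then have "vec.span F = UNIV" using lin_basic(6)[OF l(1), of cart_basis] l(2) by simp
  then have "spanning_ppf F" unfolding spanning_ppf_def proj_point_family_def using fin z pw by blast
  moreover have "card F = CARD('m)" unfolding F_def using card_image[OF inj] by simp
  moreover have "parent_function \<phi> F" unfolding parent_function_def F_def using l(1) by blast
  ultimately show ?thesis by blast
qed

lemma supp_span:
  fixes w :: "'a::field^'m"
  assumes "w \<in> vec.span ((\<lambda>i. axis i 1) ` S)"
  shows "{k. w $ k \<noteq> 0} \<subseteq> S"
proof -
  let ?T = "{w::'a^'m. \<forall>k. k \<notin> S \<longrightarrow> w $ k = 0}"
  have "vec.subspace ?T" unfolding vec.subspace_def by auto
  moreover have "(\<lambda>i. axis i 1) ` S \<subseteq> ?T" by (auto simp: axis_def)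
  ultimately have "vec.span ((\<lambda>i. axis i 1) ` S) \<subseteq> ?T" using vec.span_minimal by blast
  then show ?thesis using assms by blast
qed

lemma pw_qw:
  fixes \<phi> :: "'a::field^'m \<Rightarrow> 'a^'n" and F :: "('a^'n) set"
  assumes l: "lin_map \<phi>" and fin: "finite F"
    and e1: "\<forall>i. \<exists>v\<in>F. vec.span {\<phi> (axis i 1)} = vec.span {v}"
    and e2: "\<forall>v\<in>F. \<exists>i. vec.span {v} = vec.span {\<phi> (axis i 1)}"
  shows "proj_weight F y = quot_weight \<phi> y"
proof (rule antisym)
  obtain \<tau> where tau: "\<forall>v\<in>F. vec.span {v} = vec.span {\<phi> (axis (\<tau> v) 1)}" using e2 by metis
  obtain \<rho> where rho: "\<forall>i. \<rho> i \<in> F \<and> vec.span {\<phi> (axis i 1)} = vec.span {\<rho> i}" using e1 by metis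
  show "quot_weight \<phi> y \<le> proj_weight F y" unfolding proj_weight_def
  proof (rule INF_greatest)
    fix I assume "I \<in> {I. I \<subseteq> F \<and> y \<in> vec.span I}"
    then have I: "I \<subseteq> F" "y \<in> vec.span I" by auto
    have fI: "finite I" using finite_subset[OF I(1) fin] .
    define S where "S = \<tau> ` I"
    have "I \<subseteq> vec.span (\<phi> ` (\<lambda>i. axis i 1) ` S)"
    proof
      fix v assume v: "v \<in> I"
      have "v \<in> vec.span {v}" by (rule vec.span_base) simp
      also have "\<dots> = vec.span {\<phi> (axis (\<tau> v) 1)}" using tau v I(1) by blast
      also have "\<dots> \<subseteq> vec.span (\<phi> ` (\<lambda>i. axis i 1) ` S)" using v unfolding S_def
        by (intro vec.span_mono) auto
      finally show "v \<in> vec.span (\<phi> ` (\<lambda>i. axis i 1) ` S)" .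
    qed
    then have "vec.span I \<subseteq> vec.span (\<phi> ` (\<lambda>i. axis i 1) ` S)"
      using vec.span_minimal[OF _ vec.subspace_span] by blast
    then have "y \<in> \<phi> ` vec.span ((\<lambda>i. axis i 1) ` S)" using I(2) lin_basic(6)[OF l] by blast
    then obtain w where w: "w \<in> vec.span ((\<lambda>i. axis i 1) ` S)" "y = \<phi> w" by blast
    have "hamming_wt w \<le> card S" unfolding hamming_wt_def
      using card_mono[OF _ supp_span[OF w(1)]] fI unfolding S_def by simp
    also have "\<dots> \<le> card I" unfolding S_def using card_image_le[OF fI] .
    finally have "hamming_wt w \<le> card I" .
    then show "quot_weight \<phi> y \<le> enat (card I)" using qw_le[of \<phi> w y] w(2) by (meson enat_ord_simps(1) order_trans)
  qed
  show "proj_weight F y \<le> quot_weight \<phi> y" unfolding quot_weight_def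
  proof (rule INF_greatest)
    fix w assume "w \<in> {w. \<phi> w = y}"
    then have w: "\<phi> w = y" by simp
    define S where "S = {k. w $ k \<noteq> 0}"
    define I where "I = \<rho> ` S"
    have IF: "I \<subseteq> F" unfolding I_def using rho by blast
    have "y \<in> vec.span I"
    proof -
      have "w $ i *s \<phi> (axis i 1) \<in> vec.span I" for i
      proof (cases "w $ i = 0")
        case True then show ?thesis by (simp add: vec.span_zero)
      next
        case False
        have "\<phi> (axis i 1) \<in> vec.span {\<phi> (axis i 1)}" by (rule vec.span_base) simp
        also have "\<dots> = vec.span {\<rho> i}" using rho by blast
        also have "\<dots> \<subseteq> vec.span I" using False unfolding I_def S_def by (intro vec.span_mono) auto
        finally show ?thesis by (rule vec.span_scale)
      qed
      then have "(\<Sum>i\<in>UNIV. w $ i *s \<phi> (axis i 1)) \<in> vec.span I" by (intro vec.span_sum) 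
      then show ?thesis using lin_expand[OF l, of w] w by simp
    qed
    then have "proj_weight F y \<le> enat (card I)" unfolding proj_weight_def using IF
      by (intro INF_lower) simp
    also have "card I \<le> hamming_wt w" unfolding I_def S_def hamming_wt_def by (rule card_image_le) simp
    finally show "proj_weight F y \<le> enat (hamming_wt w)" by simp
  qed
qed

lemma span_single_zero: "vec.span {0::'a::field^'n} = {0}"
  unfolding vec.span_singleton by auto

lemma parent_good:
  fixes \<phi> :: "'a::field^'m \<Rightarrow> 'a^'n"
  assumes sp: "spanning_ppf F" and c: "card F = CARD('m)" and p: "parent_function \<phi> F"
  shows "good \<phi> \<and> proj_weight F = quot_weight \<phi>"
proof -
  have l: "lin_map \<phi>" and eqS: "{vec.span {\<phi> (axis i 1)} | i. True} = {vec.span {v} | v. v \<in> F}"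
    using p unfolding parent_function_def by auto
  have fin: "finite F" and z: "0 \<notin> F" and pwi: "\<And>u v. u \<in> F \<Longrightarrow> v \<in> F \<Longrightarrow> u \<noteq> v \<Longrightarrow> vec.independent {u, v}"
    and spF: "vec.span F = UNIV"
    using sp unfolding spanning_ppf_def proj_point_family_def by auto
  have e1: "\<forall>i. \<exists>v\<in>F. vec.span {\<phi> (axis i 1)} = vec.span {v}"
  proof
    fix i
    have "vec.span {\<phi> (axis i 1)} \<in> {vec.span {v} | v. v \<in> F}" unfolding eqS[symmetric] by blast
    then show "\<exists>v\<in>F. vec.span {\<phi> (axis i 1)} = vec.span {v}" by blast
  qed
  have e2: "\<forall>v\<in>F. \<exists>i. vec.span {v} = vec.span {\<phi> (axis i 1)}"
  proof
    fix v assume "v \<in> F"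
    then have "vec.span {v} \<in> {vec.span {\<phi> (axis i 1)} | i. True}" unfolding eqS by blast
    then show "\<exists>i. vec.span {v} = vec.span {\<phi> (axis i 1)}" by blast
  qed
  have lineinj: "inj_on (\<lambda>v. vec.span {v}) F"
  proof (rule inj_onI)
    fix u v assume uv: "u \<in> F" "v \<in> F" "vec.span {u} = vec.span {v}"
    show "u = v"
    proof (rule ccontr)
      assume "u \<noteq> v"
      then have "vec.independent {u, v}" using pwi uv by blast
      then have "u \<notin> vec.span {v}" using vec.independent_insert[of u "{v}"] \<open>u \<noteq> v\<close> by simp
      moreover have "u \<in> vec.span {u}" by (rule vec.span_base) simp
      ultimately show False using uv(3) by simp
    qed
  qed
  let ?l = "\<lambda>i. vec.span {\<phi> (axis i 1)}"
  have "range ?l = (\<lambda>v. vec.span {v}) ` F" using eqS by blast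
  then have "card (range ?l) = CARD('m)" using card_image[OF lineinj] c by simp
  then have linj: "inj ?l" using eq_card_imp_inj_on[of UNIV ?l] by simp
  have nz: "\<phi> (axis i 1) \<noteq> 0" for i
  proof
    assume 0: "\<phi> (axis i 1) = 0"
    obtain v where v: "v \<in> F" "?l i = vec.span {v}" using e1 by blast
    have "v \<in> vec.span {v}" by (rule vec.span_base) simp
    then have "v = 0" using v(2) 0 span_single_zero by auto
    then show False using v(1) z by blast
  qed
  have "F \<subseteq> range \<phi>"
  proof
    fix v assume "v \<in> F"
    then obtain i where i: "vec.span {v} = ?l i" using e2 by blast
    have "v \<in> vec.span {v}" by (rule vec.span_base) simp
    also have "\<dots> = \<phi> ` vec.span {axis i 1}" using i lin_basic(6)[OF l, of "{axis i 1}"] by simp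
    finally show "v \<in> range \<phi>" by blast
  qed
  then have "vec.span F \<subseteq> range \<phi>" using vec.span_minimal lin_subspace_range[OF l] by blast
  then have surj: "surj \<phi>" using spF by (metis top.extremum_uniqueI)
  have ker3: "3 \<le> hamming_wt x" if x: "\<phi> x = 0" "x \<noteq> 0" for x
  proof (rule ccontr)
    assume "\<not> 3 \<le> hamming_wt x"
    then have "hamming_wt x \<le> 2" by simp
    then obtain i j where xe: "x = axis i (x$i) + axis j (if i = j then 0 else x$j)" using hw_image_le by blast
    define a where "a = x $ i"
    define b where "b = (if i = j then 0 else x $ j)"
    have xab: "x = axis i a + axis j b" using xe unfolding a_def b_def .
    have "\<phi> x = a *s \<phi> (axis i 1) + b *s \<phi> (axis j 1)"
      unfolding xab lin_basic(2)[OF l] lin_axis[OF l, of i a] lin_axis[OF l, of j b] ..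
    then have eq: "a *s \<phi> (axis i 1) + b *s \<phi> (axis j 1) = 0" using x(1) by simp
    show False
    proof (cases "b = 0")
      case True
      then have "a \<noteq> 0" using xab x(2) by (auto simp: axis_def vec_eq_iff)
      then show False using eq True nz[of i] by (simp add: vec.scale_eq_0_iff)
    next
      case False
      then have ij: "i \<noteq> j" unfolding b_def by auto
      show False
      proof (cases "a = 0")
        case True
        then show False using eq False nz[of j] by (simp add: vec.scale_eq_0_iff)
      next
        case a0: False
        have "\<phi> (axis i 1) = (- b / a) *s \<phi> (axis j 1)"
        proof -
          have "a *s \<phi> (axis i 1) = - (b *s \<phi> (axis j 1))" using eq by (simp add: eq_neg_iff_add_eq_0)
          then have "(1/a) *s (a *s \<phi> (axis i 1)) = (1/a) *s (- (b *s \<phi> (axis j 1)))" by simp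
          then show ?thesis using a0 by (simp add: vector_smult_assoc)
        qed
        moreover have "\<phi> (axis j 1) = (- a / b) *s \<phi> (axis i 1)"
        proof -
          have "b *s \<phi> (axis j 1) = - (a *s \<phi> (axis i 1))" using eq by (simp add: eq_neg_iff_add_eq_0 add.commute)
          then have "(1/b) *s (b *s \<phi> (axis j 1)) = (1/b) *s (- (a *s \<phi> (axis i 1)))" by simp
          then show ?thesis using False by (simp add: vector_smult_assoc)
        qed
        ultimately have "?l i = ?l j" using span_single_sub by (metis subset_antisym)
        then show False using linj ij by (meson injD)
      qed
    qed
  qed
  have "good \<phi>" unfolding good_def using l surj ker3 by blast
  moreover have "proj_weight F = quot_weight \<phi>" using pw_qw[OF l fin e1 e2] by blast
  ultimately show ?thesis by blast
qed

lemma parent_exists: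
  fixes F :: "('a::field^'n) set"
  assumes sp: "spanning_ppf F" and c: "card F = CARD('m)"
  shows "\<exists>\<phi>::'a^'m \<Rightarrow> 'a^'n. parent_function \<phi> F"
proof -
  have fin: "finite F" using sp unfolding spanning_ppf_def proj_point_family_def by simp
  obtain g :: "'m \<Rightarrow> 'a^'n" where g: "bij_betw g UNIV F"
    using finite_same_card_bij[of "UNIV :: 'm set" F] fin c by auto
  define \<phi> where "\<phi> x = (\<Sum>i\<in>UNIV. x$i *s g i)" for x :: "'a^'m"
  have l: "lin_map \<phi>" unfolding \<phi>_def by (rule lin_mk)
  have ax: "\<phi> (axis i 1) = g i" for i
  proof -
    have "\<phi> (axis i 1) = (\<Sum>k\<in>UNIV. (if k = i then g k else 0))"
      unfolding \<phi>_def by (intro sum.cong) (auto simp: axis_def)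
    also have "\<dots> = g i" by simp
    finally show ?thesis .
  qed
  have "range g = F" using g bij_betw_imp_surj_on by blast
  then have "{vec.span {\<phi> (axis i 1)} | i. True} = {vec.span {v} | v. v \<in> F}" unfolding ax by blast
  then show ?thesis unfolding parent_function_def using l by blast
qed

theorem proposition4p2:
  assumes "CARD('n) \<le> CARD('m)"
  shows "\<exists>\<Psi> :: ('a::{field,finite}^'n \<Rightarrow> enat) set \<Rightarrow> ('a^'m) set set.
     (\<forall>F (\<phi>::'a^'m \<Rightarrow> 'a^'n). spanning_ppf F \<and> card F = CARD('m) \<and> parent_function \<phi> F \<longrightarrow>
         ker_map \<phi> \<in> Gr_set (CARD('m) - CARD('n)) \<and>
         \<Psi> (Pr_class CARD('m) (proj_weight F)) = Gr_class (CARD('m) - CARD('n)) (ker_map \<phi>))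
   \<and> bij_betw \<Psi> (Pr_bar CARD('m)) (Gr_bar (CARD('m) - CARD('n)))
   \<and> (\<forall>P \<in> Gr_set (CARD('m) - CARD('n)). \<forall>\<phi>::'a^'m \<Rightarrow> 'a^'n. lin_map \<phi> \<and> ker_map \<phi> = P \<longrightarrow>
         the_inv_into (Pr_bar CARD('m)) \<Psi> (Gr_class (CARD('m) - CARD('n)) P)
           = Pr_class CARD('m) (quot_weight \<phi>))"
proof -
  let ?\<nu> = "CARD('m)" and ?k = "CARD('m) - CARD('n)"
  define \<Psi> :: "('a^'n \<Rightarrow> enat) set \<Rightarrow> ('a^'m) set set" where
    "\<Psi> C = Gr_class ?k (ker_map (SOME \<phi>::'a^'m \<Rightarrow> 'a^'n. good \<phi> \<and> C = Pr_class ?\<nu> (quot_weight \<phi>)))" for C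
  have QP: "quot_weight \<phi> \<in> Pr_set ?\<nu>" if g: "good \<phi>" for \<phi> :: "'a^'m \<Rightarrow> 'a^'n"
  proof -
    let ?F = "range (\<lambda>i. \<phi> (axis i 1))"
    have F: "spanning_ppf ?F" "card ?F = ?\<nu>" "parent_function \<phi> ?F" using good_family[OF g] by auto
    then have "proj_weight ?F = quot_weight \<phi>" using parent_good by blast
    then show ?thesis unfolding Pr_set_def using F by force
  qed
  have Eq: "Pr_class ?\<nu> (quot_weight \<phi>1) = Pr_class ?\<nu> (quot_weight \<phi>2) \<longleftrightarrow>
      Gr_class ?k (ker_map \<phi>1) = Gr_class ?k (ker_map \<phi>2)"
    if g1: "good \<phi>1" and g2: "good \<phi>2" for \<phi>1 \<phi>2 :: "'a^'m \<Rightarrow> 'a^'n"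
    unfolding Pr_class_eq[OF QP[OF g1] QP[OF g2]] Gr_class_eq[OF good_Gr[OF g1] good_Gr[OF g2]]
    using he_ker[OF g1 g2] iso_he[OF g1 g2] by blast
  have PsiE: "\<Psi> (Pr_class ?\<nu> (quot_weight \<phi>)) = Gr_class ?k (ker_map \<phi>)" if g: "good \<phi>"
    for \<phi> :: "'a^'m \<Rightarrow> 'a^'n"
  proof -
    define \<psi> where "\<psi> = (SOME \<psi>::'a^'m \<Rightarrow> 'a^'n. good \<psi> \<and> Pr_class ?\<nu> (quot_weight \<phi>) = Pr_class ?\<nu> (quot_weight \<psi>))"
    have "good \<psi> \<and> Pr_class ?\<nu> (quot_weight \<phi>) = Pr_class ?\<nu> (quot_weight \<psi>)"
      unfolding \<psi>_def by (rule someI[of _ \<phi>]) (simp add: g)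
    then have "Gr_class ?k (ker_map \<phi>) = Gr_class ?k (ker_map \<psi>)" using Eq g by blast
    then show ?thesis unfolding \<Psi>_def \<psi>_def by simp
  qed
  have PrSet: "Pr_set ?\<nu> = quot_weight ` {\<phi>::'a^'m \<Rightarrow> 'a^'n. good \<phi>}"
  proof (intro equalityI subsetI)
    fix w :: "'a^'n \<Rightarrow> enat" assume "w \<in> Pr_set ?\<nu>"
    then obtain F :: "('a^'n) set" where F: "w = proj_weight F" "spanning_ppf F" "card F = ?\<nu>"
      unfolding Pr_set_def by blast
    then obtain \<phi> :: "'a^'m \<Rightarrow> 'a^'n" where "parent_function \<phi> F" using parent_exists by blast
    then have "good \<phi>" "w = quot_weight \<phi>" using parent_good F by blast+
    then show "w \<in> quot_weight ` {\<phi>::'a^'m \<Rightarrow> 'a^'n. good \<phi>}" by blast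
  next
    fix w :: "'a^'n \<Rightarrow> enat" assume "w \<in> quot_weight ` {\<phi>::'a^'m \<Rightarrow> 'a^'n. good \<phi>}"
    then show "w \<in> Pr_set ?\<nu>" using QP by blast
  qed
  have PrBar: "Pr_bar ?\<nu> = (\<lambda>\<phi>. Pr_class ?\<nu> (quot_weight \<phi>)) ` {\<phi>::'a^'m \<Rightarrow> 'a^'n. good \<phi>}"
    unfolding Pr_bar_def PrSet by (simp add: image_comp o_def)
  have c1: "ker_map \<phi> \<in> Gr_set ?k \<and> \<Psi> (Pr_class ?\<nu> (proj_weight F)) = Gr_class ?k (ker_map \<phi>)"
    if "spanning_ppf F \<and> card F = ?\<nu> \<and> parent_function \<phi> F" for F :: "('a^'n) set" and \<phi> :: "'a^'m \<Rightarrow> 'a^'n"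
  proof -
    have "good \<phi>" "proj_weight F = quot_weight \<phi>" using parent_good that by blast+
    then show ?thesis using good_Gr PsiE by simp
  qed
  have inj: "inj_on \<Psi> (Pr_bar ?\<nu>)"
  proof (rule inj_onI)
    fix x y assume x: "x \<in> Pr_bar ?\<nu>" and y: "y \<in> Pr_bar ?\<nu>" and e: "\<Psi> x = \<Psi> y"
    obtain \<phi>1 :: "'a^'m \<Rightarrow> 'a^'n" where 1: "good \<phi>1" "x = Pr_class ?\<nu> (quot_weight \<phi>1)" using x unfolding PrBar by blast
    obtain \<phi>2 :: "'a^'m \<Rightarrow> 'a^'n" where 2: "good \<phi>2" "y = Pr_class ?\<nu> (quot_weight \<phi>2)" using y unfolding PrBar by blast
    show "x = y" using e Eq[OF 1(1) 2(1)] PsiE[OF 1(1)] PsiE[OF 2(1)] 1(2) 2(2) by simp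
  qed
  have img: "\<Psi> ` Pr_bar ?\<nu> = Gr_bar ?k"
  proof (intro equalityI subsetI)
    fix G :: "('a^'m) set set" assume "G \<in> \<Psi> ` Pr_bar ?\<nu>"
    then obtain \<phi> :: "'a^'m \<Rightarrow> 'a^'n" where "good \<phi>" "G = \<Psi> (Pr_class ?\<nu> (quot_weight \<phi>))"
      unfolding PrBar by blast
    then show "G \<in> Gr_bar ?k" unfolding Gr_bar_def using PsiE good_Gr by auto
  next
    fix G :: "('a^'m) set set" assume "G \<in> Gr_bar ?k"
    then obtain P :: "('a^'m) set" where P: "P \<in> Gr_set ?k" "G = Gr_class ?k P" unfolding Gr_bar_def by blast
    obtain \<phi> :: "'a^'m \<Rightarrow> 'a^'n" where \<phi>: "lin_map \<phi>" "ker_map \<phi> = P" using Gr_construct[OF assms P(1)] by blast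
    have g: "good \<phi>" using Gr_good[OF assms \<phi>(1)] \<phi>(2) P(1) by simp
    have "G = \<Psi> (Pr_class ?\<nu> (quot_weight \<phi>))" using PsiE[OF g] \<phi>(2) P(2) by simp
    moreover have "Pr_class ?\<nu> (quot_weight \<phi>) \<in> Pr_bar ?\<nu>" unfolding PrBar using g by blast
    ultimately show "G \<in> \<Psi> ` Pr_bar ?\<nu>" by blast
  qed
  have c3: "the_inv_into (Pr_bar ?\<nu>) \<Psi> (Gr_class ?k P) = Pr_class ?\<nu> (quot_weight \<phi>)"
    if "P \<in> Gr_set ?k" "lin_map \<phi> \<and> ker_map \<phi> = P" for P :: "('a^'m) set" and \<phi> :: "'a^'m \<Rightarrow> 'a^'n"
  proof -
    have g: "good \<phi>" using Gr_good[OF assms] that by blast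
    show ?thesis
    proof (rule the_inv_into_f_eq[OF inj])
      show "\<Psi> (Pr_class ?\<nu> (quot_weight \<phi>)) = Gr_class ?k P" using PsiE[OF g] that by simp
      show "Pr_class ?\<nu> (quot_weight \<phi>) \<in> Pr_bar ?\<nu>" unfolding PrBar using g by blast
    qed
  qed
  show ?thesis
    apply (rule exI[of _ \<Psi>])
    using c1 inj img c3 unfolding bij_betw_def by blast
qed

end
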